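(* Suppose there are real numbers $a_k,b_k$, $k\in\{1,\dots,m\}$, such that $g(x)=\min_{k\in[m]}\{a_k+b_kx\}$ for all $x\in[0,1]$. Then $\sup_{\mathbf x\in[0,1]^c}\mathcal R(\mathbf x)$ equals the optimal value of the linear program $$\max_{\pi\ge 0,\ (g_j)_{j=1}^c}\ \sum_{j=1}^c\lambda g_j\quad\text{s.t.}\quad g_j\le a_k\pi_j+b_k\frac{c-j+1}{\lambda d}\pi_{j-1}\ \ \forall k\in[m],\,j\in[c];\qquad \pi_j\ge \frac{c-j+1}{\lambda d}\pi_{j-1}\ \ \forall j\in[c];\qquad \sum_{j=0}^c\pi_j=1 .$$
   Context: Setting. Fix $c\in\mathbb N$ (number of identical units of a single reusable resource), an arrival rate $\lambda>0$ and a mean usage duration $d>0$, with $x^*:=c/(\lambda d)\in(0,1)$. Let $g:[0,1]\to\mathbb R$ be concave, non-decreasing, with $g(0)=0$ (the reward function). A stock-dependent policy is a vector $\mathbf x=(x_1,\dots,x_c)\in[0,1]^c$, where $x_j$ is the admission probability used when exactly $j$ units are available (the admission probability is $0$ when no unit is available). Its steady-state distribution is the unique probability vector $\pi=(\pi_0,\dots,\pi_c)$ satisfying $\pi_j\lambda x_j=\pi_{j-1}(c-j+1)/d$ for all $j\in\{1,\dots,c\}$, and its long-run average reward is $\mathcal R(\mathbf x)=\sum_{j=1}^c\pi_j\lambda g(x_j)$. *)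

theory Defs
  imports "HOL-Analysis.Analysis"
begin

definition steady_state :: "nat \<Rightarrow> real \<Rightarrow> real \<Rightarrow> (nat \<Rightarrow> real) \<Rightarrow> (nat \<Rightarrow> real)" where
  "steady_state c lam d x = (THE p.
      (\<forall>j\<le>c. 0 \<le> p j) \<and> (\<forall>j>c. p j = 0) \<and> (\<Sum>j=0..c. p j) = 1 \<and>
      (\<forall>j\<in>{1..c}. p j * lam * x j = p (j - 1) * (real c - real j + 1) / d))"

definition avg_reward :: "nat \<Rightarrow> real \<Rightarrow> real \<Rightarrow> (real \<Rightarrow> real) \<Rightarrow> (nat \<Rightarrow> real) \<Rightarrow> real" where
  "avg_reward c lam d g x = (\<Sum>j=1..c. steady_state c lam d x j * lam * g (x j))"

definition policies :: "nat \<Rightarrow> (nat \<Rightarrow> real) set" where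
  "policies c = {x. \<forall>j\<in>{1..c}. 0 \<le> x j \<and> x j \<le> 1}"

definition lp_feasible :: "nat \<Rightarrow> real \<Rightarrow> real \<Rightarrow> nat \<Rightarrow> (nat \<Rightarrow> real) \<Rightarrow> (nat \<Rightarrow> real)
    \<Rightarrow> (nat \<Rightarrow> real) \<Rightarrow> (nat \<Rightarrow> real) \<Rightarrow> bool" where
  "lp_feasible c lam d m a b p gg \<longleftrightarrow>
     (\<forall>j\<in>{0..c}. 0 \<le> p j) \<and>
     (\<forall>k\<in>{1..m}. \<forall>j\<in>{1..c}.
        gg j \<le> a k * p j + b k * ((real c - real j + 1) / (lam * d)) * p (j - 1)) \<and>
     (\<forall>j\<in>{1..c}. p j \<ge> ((real c - real j + 1) / (lam * d)) * p (j - 1)) \<and>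
     (\<Sum>j=0..c. p j) = 1"

definition lp_objective :: "nat \<Rightarrow> real \<Rightarrow> (nat \<Rightarrow> real) \<Rightarrow> real" where
  "lp_objective c lam gg = (\<Sum>j=1..c. lam * gg j)"

end

theory Submission
  imports Defs
begin

lemma cpt: "compact (PiE UNIV (\<lambda>_::nat. {0..1::real}))"
proof -
  have "compactin (product_topology (\<lambda>_. euclidean) UNIV) (PiE UNIV (\<lambda>_::nat. {0..1::real}))"
    by (simp add: compactin_PiE)
  thus ?thesis by (simp add: euclidean_product_topology)
qed

lemma cont_Min:
  fixes f :: "'k \<Rightarrow> 'a::topological_space \<Rightarrow> real"
  assumes "finite A" "A \<noteq> {}" "\<And>k. k \<in> A \<Longrightarrow> continuous_on S (f k)"
  shows "continuous_on S (\<lambda>x. Min ((\<lambda>k. f k x) ` A))"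
  using assms
proof (induction A rule: finite_ne_induct)
  case (singleton a) thus ?case by simp
next
  case (insert a A)
  have "continuous_on S (\<lambda>x. min (f a x) (Min ((\<lambda>k. f k x) ` A)))"
    using insert by (intro continuous_on_min) auto
  moreover have "\<And>x. Min ((\<lambda>k. f k x) ` insert a A) = min (f a x) (Min ((\<lambda>k. f k x) ` A))"
    using insert by simp
  ultimately show ?case by simp
qed

definition SSP :: "nat \<Rightarrow> real \<Rightarrow> real \<Rightarrow> (nat \<Rightarrow> real) \<Rightarrow> (nat \<Rightarrow> real) \<Rightarrow> bool" where
  "SSP c lam d x p \<longleftrightarrow> (\<forall>j\<le>c. 0 \<le> p j) \<and> (\<forall>j>c. p j = 0) \<and> (\<Sum>j=0..c. p j) = 1 \<and>
      (\<forall>j\<in>{1..c}. p j * lam * x j = p (j - 1) * (real c - real j + 1) / d)"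

lemma ss_step:
  assumes "SSP c lam d x p" "d > 0" "1 \<le> j" "j \<le> c"
  shows "p (j-1) = p j * (lam * x j * d / (real c - real j + 1))"
proof -
  have e: "p j * lam * x j = p (j - 1) * (real c - real j + 1) / d"
    using assms unfolding SSP_def by auto
  have pos: "real c - real j + 1 > 0" using assms by simp
  show ?thesis using e pos assms(2) by (simp add: field_simps)
qed

lemma ss_zero:
  assumes "SSP c lam d x p" "d > 0" "p c = 0"
  shows "n \<le> c \<Longrightarrow> p (c - n) = 0"
proof (induction n)
  case 0 thus ?case using assms by simp
next
  case (Suc n)
  hence j: "1 \<le> c - n" "c - n \<le> c" by auto
  have e1: "p (c - n - 1) = p (c - n) * (lam * x (c-n) * d / (real c - real (c-n) + 1))"
    using ss_step[OF assms(1,2) j] .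
  have e2: "p (c - n) = 0" using Suc.IH Suc.prems by simp
  have e3: "c - Suc n = c - n - 1" by arith
  show ?case unfolding e3 e1 e2 by simp
qed

lemma ss_cnz:
  assumes "SSP c lam d x p" "d > 0"
  shows "p c \<noteq> 0"
proof
  assume h: "p c = 0"
  have "\<And>j. j \<in> {0..c} \<Longrightarrow> p j = 0"
  proof -
    fix j assume "j \<in> {0..c}"
    hence e: "c - (c - j) = j" and l: "c - j \<le> c" by auto
    show "p j = 0" using ss_zero[OF assms h l] unfolding e .
  qed
  hence "(\<Sum>j=0..c. p j) = 0" by simp
  thus False using assms unfolding SSP_def by simp
qed

lemma ss_cross:
  assumes "SSP c lam d x p" "SSP c lam d x q" "d > 0"
  shows "n \<le> c \<Longrightarrow> p (c - n) * q c = q (c - n) * p c"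
proof (induction n)
  case 0 thus ?case by simp
next
  case (Suc n)
  hence j: "1 \<le> c - n" "c - n \<le> c" by auto
  define r where "r = lam * x (c-n) * d / (real c - real (c-n) + 1)"
  have e1: "p (c - n - 1) = p (c - n) * r" using ss_step[OF assms(1,3) j] unfolding r_def .
  have e2: "q (c - n - 1) = q (c - n) * r" using ss_step[OF assms(2,3) j] unfolding r_def .
  have IH: "p (c - n) * q c = q (c - n) * p c" using Suc.IH Suc.prems by simp
  have e3: "c - Suc n = c - n - 1" by arith
  have "p (c - n) * r * q c = r * (p (c - n) * q c)" by (simp only: mult_ac)
  also have "\<dots> = r * (q (c - n) * p c)" by (simp only: IH)
  also have "\<dots> = q (c - n) * r * p c" by (simp only: mult_ac)
  finally show ?case unfolding e3 e1 e2 .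
qed

lemma ss_unique:
  assumes "SSP c lam d x p" "SSP c lam d x q" "d > 0"
  shows "p = q"
proof -
  have cr: "\<And>j. j \<le> c \<Longrightarrow> p j * q c = q j * p c"
  proof -
    fix j assume "j \<le> c"
    hence e: "c - (c - j) = j" and l: "c - j \<le> c" by auto
    show "p j * q c = q j * p c" using ss_cross[OF assms l] unfolding e .
  qed
  have "(\<Sum>j=0..c. p j * q c) = (\<Sum>j=0..c. q j * p c)"
    using cr by (intro sum.cong) auto
  hence "(\<Sum>j=0..c. p j) * q c = (\<Sum>j=0..c. q j) * p c"
    by (simp add: sum_distrib_right)
  hence eq: "q c = p c" using assms unfolding SSP_def by simp
  have nz: "q c \<noteq> 0" using ss_cnz[OF assms(2,3)] .
  show ?thesis
  proof
    fix j
    show "p j = q j"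
    proof (cases "j \<le> c")
      case True
      from cr[OF True] eq nz show ?thesis by (metis mult_right_cancel)
    next
      case False thus ?thesis using assms unfolding SSP_def by auto
    qed
  qed
qed

lemma ss_is:
  assumes "SSP c lam d x p" "d > 0"
  shows "steady_state c lam d x = p"
  unfolding steady_state_def SSP_def[symmetric]
  using assms ss_unique by (intro the_equality) auto

lemma ss_exists:
  assumes "d > 0" "lam > 0" "\<forall>j\<in>{1..c}. 0 \<le> x j"
  shows "\<exists>p. SSP c lam d x p"
proof -
  define r where "r i = lam * x i * d / (real c - real i + 1)" for i
  define w where "w j = (\<Prod>i\<in>{Suc j..c}. r i)" for j
  define W where "W = (\<Sum>j=0..c. w j)"
  have wnn: "w j \<ge> 0" for j
    unfolding w_def r_def using assms by (intro prod_nonneg) auto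
  have wc: "w c = 1" unfolding w_def by simp
  have "w c \<le> W" unfolding W_def using wnn by (intro member_le_sum) auto
  hence Wp: "W > 0" using wc by simp
  define q where "q j = (if j \<le> c then w j / W else 0)" for j
  have "SSP c lam d x q"
    unfolding SSP_def
  proof (intro conjI allI impI ballI)
    show "\<And>j. j \<le> c \<Longrightarrow> 0 \<le> q j" unfolding q_def using wnn Wp by simp
    show "\<And>j. c < j \<Longrightarrow> q j = 0" unfolding q_def by simp
    have "(\<Sum>j=0..c. q j) = (\<Sum>j=0..c. w j / W)" unfolding q_def by (intro sum.cong) auto
    also have "\<dots> = 1" using Wp unfolding W_def by (simp add: sum_divide_distrib[symmetric])
    finally show "(\<Sum>j=0..c. q j) = 1" .
    fix j assume j: "j \<in> {1..c}"
    have "w (j-1) = r j * w j"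
      unfolding w_def using j by (simp add: prod.atLeast_Suc_atMost)
    moreover have pos: "real c - real j + 1 > 0" using j by simp
    ultimately show "q j * lam * x j = q (j - 1) * (real c - real j + 1) / d"
      unfolding q_def r_def using j assms(1) Wp by (simp add: field_simps)
  qed
  thus ?thesis by blast
qed


lemma closed_imp_const: "closed {x. Q x} \<Longrightarrow> closed {x. P \<longrightarrow> Q x}"
  by (cases P) (simp_all add: closed_Collect_const)

theorem theorem1:
  fixes c m :: nat and lam d :: real and g :: "real \<Rightarrow> real" and a b :: "nat \<Rightarrow> real"
  assumes "c \<ge> 1" and "lam > 0" and "d > 0"
    and "real c / (lam * d) < 1"
    and "concave_on {0..1} g" and "mono_on {0..1} g" and "g 0 = 0"
    and "m \<ge> 1"
    and "\<forall>x\<in>{0..1}. g x = (MIN k\<in>{1..m}. a k + b k * x)"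
  shows "(\<exists>p gg. lp_feasible c lam d m a b p gg \<and>
            lp_objective c lam gg = (SUP x\<in>policies c. avg_reward c lam d g x))
       \<and> (\<forall>p gg. lp_feasible c lam d m a b p gg \<longrightarrow>
            lp_objective c lam gg \<le> (SUP x\<in>policies c. avg_reward c lam d g x))"
proof -
  note lam = assms(2) and dpos = assms(3) and gmin = assms(9)
  define coef where "coef j = (real c - real j + 1) / (lam * d)" for j :: nat
  define G where "G p j = (MIN k\<in>{1..m}. a k * p j + b k * ((real c - real j + 1) / (lam * d)) * p (j - 1))"
    for p :: "nat \<Rightarrow> real" and j
  define F where "F p = (\<Sum>j=1..c. lam * G p j)" for p
  define C where "C = {p :: nat \<Rightarrow> real. (\<forall>j. c < j \<longrightarrow> p j = 0) \<and>
      (\<forall>j. (1 \<le> j \<and> j \<le> c) \<longrightarrow> coef j * p (j - 1) \<le> p j) \<and> (\<Sum>j=0..c. p j) = 1}"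
  define K where "K = (UNIV \<rightarrow>\<^sub>E {0..1::real}) \<inter> C"
  have fin: "finite {1..m}" and ne: "{1..m} \<noteq> {}" using assms(8) by auto
  have coefpos: "coef j > 0" if "j \<le> c" for j
    unfolding coef_def using that lam dpos by simp
  have coefG: "(real c - real j + 1) / (lam * d) = coef j" for j unfolding coef_def ..
  have inK: "p \<in> K \<longleftrightarrow> (\<forall>j. 0 \<le> p j \<and> p j \<le> 1) \<and> (\<forall>j. c < j \<longrightarrow> p j = 0) \<and>
      (\<forall>j. (1 \<le> j \<and> j \<le> c) \<longrightarrow> coef j * p (j - 1) \<le> p j) \<and> (\<Sum>j=0..c. p j) = 1" for p
    unfolding K_def C_def by (auto simp: PiE_def extensional_def)
  have gle: "g y \<le> a k + b k * y" if "y \<in> {0..1}" "k \<in> {1..m}" for y k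
    using gmin that fin by (simp add: Min_le)

  have pol: "steady_state c lam d x \<in> K \<and> avg_reward c lam d g x \<le> F (steady_state c lam d x)"
    if x: "x \<in> policies c" for x
  proof -
    have xr: "0 \<le> x j" "x j \<le> 1" if "j \<in> {1..c}" for j using x that unfolding policies_def by auto
    obtain q where q: "SSP c lam d x q" using ss_exists[OF dpos lam] xr by blast
    have pi: "steady_state c lam d x = q" using ss_is[OF q dpos] .
    have qnn: "j \<le> c \<Longrightarrow> 0 \<le> q j" "c < j \<Longrightarrow> q j = 0" "(\<Sum>j=0..c. q j) = 1"
      "j \<in> {1..c} \<Longrightarrow> q j * lam * x j = q (j - 1) * (real c - real j + 1) / d" for j
      using q unfolding SSP_def by auto
    have q0: "0 \<le> q j" for j using qnn(1,2) by (cases "j \<le> c") auto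
    have q1: "q j \<le> 1" for j
    proof (cases "j \<le> c")
      case True
      have "q j \<le> (\<Sum>i=0..c. q i)" using True q0 by (intro member_le_sum) auto
      thus ?thesis using qnn(3) by simp
    next
      case False thus ?thesis using qnn(2) by simp
    qed
    have qx: "coef j * q (j - 1) = q j * x j" if "j \<in> {1..c}" for j
      using qnn(4)[OF that] lam dpos unfolding coef_def by (simp add: field_simps)
    have "q \<in> K"
      unfolding inK
    proof (intro conjI allI impI)
      fix j assume "1 \<le> j \<and> j \<le> c"
      hence j: "j \<in> {1..c}" by auto
      have "q j * x j \<le> q j * 1" using xr[OF j] q0 by (intro mult_left_mono) auto
      thus "coef j * q (j - 1) \<le> q j" using qx[OF j] by simp
    qed (use q0 q1 qnn in auto)
    moreover have "avg_reward c lam d g x \<le> F q"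
      unfolding avg_reward_def F_def pi
    proof (intro sum_mono)
      fix j assume j: "j \<in> {1..c}"
      have "q j * g (x j) \<le> G q j"
        unfolding G_def
      proof (intro Min.boundedI)
        show "finite ((\<lambda>k. a k * q j + b k * ((real c - real j + 1) / (lam * d)) * q (j - 1)) ` {1..m})"
          using fin by simp
        show "(\<lambda>k. a k * q j + b k * ((real c - real j + 1) / (lam * d)) * q (j - 1)) ` {1..m} \<noteq> {}"
          using ne by simp
        fix t assume "t \<in> (\<lambda>k. a k * q j + b k * ((real c - real j + 1) / (lam * d)) * q (j - 1)) ` {1..m}"
        then obtain k where k: "k \<in> {1..m}" and t: "t = a k * q j + b k * (coef j) * q (j - 1)"
          unfolding coefG by auto
        have "q j * g (x j) \<le> q j * (a k + b k * x j)"
          using gle[OF _ k, of "x j"] xr[OF j] q0 by (intro mult_left_mono) auto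
        also have "\<dots> = t" unfolding t using qx[OF j] by (simp add: algebra_simps)
        finally show "q j * g (x j) \<le> t" .
      qed
      thus "q j * lam * g (x j) \<le> lam * G q j" using lam
        by (metis mult.commute mult.left_commute mult_left_mono less_imp_le)
    qed
    ultimately show ?thesis using pi by simp
  qed

  have realise: "\<exists>x\<in>policies c. F p \<le> avg_reward c lam d g x" if pK: "p \<in> K" for p
  proof -
    have p0: "0 \<le> p j" "p j \<le> 1" and pc: "c < j \<Longrightarrow> p j = 0"
      and pcoef: "1 \<le> j \<Longrightarrow> j \<le> c \<Longrightarrow> coef j * p (j - 1) \<le> p j" and psum: "(\<Sum>j=0..c. p j) = 1" for j
      using pK unfolding inK by auto
    have pz: "p (j - 1) = 0" if "1 \<le> j" "j \<le> c" "p j = 0" for j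
    proof -
      have "coef j * p (j - 1) \<le> 0" using pcoef[OF that(1,2)] that(3) by simp
      hence "p (j - 1) \<le> 0" using coefpos[OF that(2)] by (simp add: mult_le_0_iff)
      thus ?thesis using p0[of "j-1"] by simp
    qed
    define x where "x j = (if p j = 0 then 0 else coef j * p (j - 1) / p j)" for j
    have xr: "0 \<le> x j \<and> x j \<le> 1" if "1 \<le> j" "j \<le> c" for j
    proof (cases "p j = 0")
      case False
      hence pp: "p j > 0" using p0[of j] by simp
      have "0 \<le> coef j * p (j - 1)" using coefpos[OF that(2)] p0[of "j-1"] by simp
      thus ?thesis using pcoef[OF that] pp unfolding x_def by (simp add: field_simps)
    qed (simp add: x_def)
    have xp: "p j * x j = coef j * p (j - 1)" if "1 \<le> j" "j \<le> c" for j
      using pz[OF that] unfolding x_def by (cases "p j = 0") auto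
    have xpol: "x \<in> policies c" unfolding policies_def using xr by auto
    have "SSP c lam d x p"
      unfolding SSP_def
    proof (intro conjI allI impI ballI)
      fix j assume "j \<in> {1..c}"
      hence "p j * x j = coef j * p (j - 1)" using xp by auto
      thus "p j * lam * x j = p (j - 1) * (real c - real j + 1) / d"
        using lam dpos unfolding coef_def by (simp add: field_simps)
    qed (use p0 pc psum in auto)
    hence pi: "steady_state c lam d x = p" using ss_is dpos by blast
    have "F p \<le> avg_reward c lam d g x"
      unfolding F_def avg_reward_def pi
    proof (intro sum_mono)
      fix j assume j: "j \<in> {1..c}"
      hence j1: "1 \<le> j" "j \<le> c" by auto
      have "G p j \<le> p j * g (x j)"
      proof (cases "p j = 0")
        case True
        have "G p j \<le> a 1 * p j + b 1 * ((real c - real j + 1) / (lam * d)) * p (j - 1)"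
          unfolding G_def using fin assms(8) by (intro Min_le) auto
        thus ?thesis using True pz[OF j1] by simp
      next
        case False
        have "g (x j) \<in> (\<lambda>k. a k + b k * x j) ` {1..m}"
          using gmin xr[OF j1] fin ne by (simp del: Min_in add: Min_in)
        then obtain k where k: "k \<in> {1..m}" and gk: "g (x j) = a k + b k * x j" by auto
        have "G p j \<le> a k * p j + b k * ((real c - real j + 1) / (lam * d)) * p (j - 1)"
          unfolding G_def using fin k by (intro Min_le) auto
        also have "\<dots> = p j * g (x j)" unfolding gk coefG using xp[OF j1]
          by (simp add: algebra_simps)
        finally show ?thesis .
      qed
      thus "lam * G p j \<le> p j * lam * g (x j)" using lam
        by (metis mult.commute mult.left_commute mult_left_mono less_imp_le)
    qed
    thus ?thesis using xpol by blast
  qed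

  have lpK: "\<exists>p'\<in>K. lp_objective c lam gg \<le> F p'" if f: "lp_feasible c lam d m a b p gg" for p gg
  proof -
    define p' where "p' j = (if j \<le> c then p j else 0)" for j
    have fp: "\<And>j. j \<in> {0..c} \<Longrightarrow> 0 \<le> p j"
      "\<And>k j. k \<in> {1..m} \<Longrightarrow> j \<in> {1..c} \<Longrightarrow>
        gg j \<le> a k * p j + b k * ((real c - real j + 1) / (lam * d)) * p (j - 1)"
      "\<And>j. j \<in> {1..c} \<Longrightarrow> p j \<ge> ((real c - real j + 1) / (lam * d)) * p (j - 1)"
      "(\<Sum>j=0..c. p j) = 1"
      using f unfolding lp_feasible_def by auto
    have s': "(\<Sum>j=0..c. p' j) = 1" using fp(4) unfolding p'_def by simp
    have p'0: "0 \<le> p' j" for j using fp(1) unfolding p'_def by auto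
    have "p' \<in> K" unfolding inK
    proof (intro conjI allI impI)
      fix j
      show "0 \<le> p' j" by (rule p'0)
      show "p' j \<le> 1"
      proof (cases "j \<le> c")
        case True
        have "p' j \<le> (\<Sum>i=0..c. p' i)" using True p'0 by (intro member_le_sum) auto
        thus ?thesis using s' by simp
      qed (simp add: p'_def)
    next
      fix j assume "1 \<le> j \<and> j \<le> c"
      thus "coef j * p' (j - 1) \<le> p' j" using fp(3)[of j] unfolding p'_def coefG by auto
    qed (use s' p'_def in auto)
    moreover have "lp_objective c lam gg \<le> F p'"
      unfolding lp_objective_def F_def
    proof (intro sum_mono)
      fix j assume j: "j \<in> {1..c}"
      have "gg j \<le> G p' j" unfolding G_def
        using fin ne fp(2)[OF _ j] j unfolding p'_def by (intro Min.boundedI) auto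
      thus "lam * gg j \<le> lam * G p' j" using lam by simp
    qed
    ultimately show ?thesis by blast
  qed

  have Kfeas: "lp_feasible c lam d m a b p (G p) \<and> lp_objective c lam (G p) = F p" if "p \<in> K" for p
  proof -
    have "(\<forall>j. 0 \<le> p j \<and> p j \<le> 1)" "(\<forall>j. (1 \<le> j \<and> j \<le> c) \<longrightarrow> coef j * p (j - 1) \<le> p j)"
      "(\<Sum>j=0..c. p j) = 1" using that unfolding inK by auto
    moreover have "G p j \<le> a k * p j + b k * ((real c - real j + 1) / (lam * d)) * p (j - 1)"
      if "k \<in> {1..m}" for k j unfolding G_def using fin that by (intro Min_le) auto
    ultimately show ?thesis unfolding lp_feasible_def lp_objective_def F_def coefG by auto
  qed

  have contc: "continuous_on S (\<lambda>p::nat\<Rightarrow>real. p j)" for S j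
    by (rule continuous_on_subset[OF continuous_on_product_coordinates subset_UNIV])
  have cl1: "closed {p :: nat \<Rightarrow> real. \<forall>j. c < j \<longrightarrow> p j = 0}"
  proof (rule closed_Collect_all)
    fix j show "closed {p :: nat \<Rightarrow> real. c < j \<longrightarrow> p j = 0}"
      by (rule closed_imp_const, rule closed_Collect_eq, rule contc, rule continuous_on_const)
  qed
  have cl2: "closed {p :: nat \<Rightarrow> real. \<forall>j. (1 \<le> j \<and> j \<le> c) \<longrightarrow> coef j * p (j - 1) \<le> p j}"
  proof (rule closed_Collect_all)
    fix j show "closed {p :: nat \<Rightarrow> real. (1 \<le> j \<and> j \<le> c) \<longrightarrow> coef j * p (j - 1) \<le> p j}"
      by (rule closed_imp_const, rule closed_Collect_le,
          rule continuous_on_mult[OF continuous_on_const contc], rule contc)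
  qed
  have cl3: "closed {p :: nat \<Rightarrow> real. (\<Sum>j=0..c. p j) = 1}"
    by (rule closed_Collect_eq, rule continuous_on_sum, rule contc, rule continuous_on_const)
  have "closed C" unfolding C_def
    by (rule closed_Collect_conj[OF cl1 closed_Collect_conj[OF cl2 cl3]])
  hence cK: "compact K" unfolding K_def using cpt by (simp add: compact_Int_closed)
  have polne: "(\<lambda>_. 1) \<in> policies c" unfolding policies_def by simp
  hence Kne: "K \<noteq> {}" using pol by blast
  have "continuous_on K F" unfolding F_def G_def
    by (intro continuous_on_sum continuous_on_mult continuous_on_const cont_Min[OF fin ne] continuous_on_add contc)
  then obtain ps where ps: "ps \<in> K" and psmax: "\<And>p. p \<in> K \<Longrightarrow> F p \<le> F ps"
    using continuous_attains_sup[OF cK Kne] by blast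
  have ub: "avg_reward c lam d g x \<le> F ps" if "x \<in> policies c" for x
    using pol[OF that] psmax by (meson order_trans)
  have bdd: "bdd_above (avg_reward c lam d g ` policies c)" using ub by (rule bdd_aboveI2)
  have le1: "(SUP x\<in>policies c. avg_reward c lam d g x) \<le> F ps"
    using polne ub by (intro cSUP_least) auto
  obtain xs where xs: "xs \<in> policies c" "F ps \<le> avg_reward c lam d g xs" using realise[OF ps] by blast
  have "avg_reward c lam d g xs \<le> (SUP x\<in>policies c. avg_reward c lam d g x)"
    using bdd xs(1) by (rule cSUP_upper2) simp
  with xs le1 have eqS: "F ps = (SUP x\<in>policies c. avg_reward c lam d g x)" by linarith
  show ?thesis
  proof (intro conjI allI impI)
    show "\<exists>p gg. lp_feasible c lam d m a b p gg \<and>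
            lp_objective c lam gg = (SUP x\<in>policies c. avg_reward c lam d g x)"
      using Kfeas[OF ps] eqS by metis
  next
    fix p gg assume "lp_feasible c lam d m a b p gg"
    then obtain p' where "p' \<in> K" "lp_objective c lam gg \<le> F p'" using lpK by blast
    thus "lp_objective c lam gg \<le> (SUP x\<in>policies c. avg_reward c lam d g x)"
      using psmax eqS by (metis order_trans)
  qed
qed

end
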